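(* Let $S(\lambda)=\frac12\begin{bmatrix}\lambda_1^2&\lambda_1\lambda_2&\lambda_1\lambda_2&\lambda_2^2&\sqrt3\end{bmatrix}$ on ${\mathbb B}^2$, let $C=\begin{bmatrix}\frac12&0&0\end{bmatrix}$, $D=\begin{bmatrix}0&0&0&0&\frac{\sqrt3}{2}\end{bmatrix}$, and for $\gamma\in{\mathbb C}$ let $A_{\gamma,1}=\begin{bmatrix}0&1&0\\0&0&0\\ \gamma&0&0\end{bmatrix}$, $A_{\gamma,2}=\begin{bmatrix}0&0&1\\-\gamma&0&0\\0&0&0\end{bmatrix}$, ${\mathbf A}_\gamma=(A_{\gamma,1},A_{\gamma,2})$. Then $S\in{\mathcal S}_2({\mathbb C}^5,{\mathbb C})$, and for every $\gamma$ with $|\gamma|<\sqrt{3/8}$ the pair $(C,{\mathbf A}_\gamma)$ is contractive and observable and there exist $B_{\gamma,1},B_{\gamma,2}\in{\mathbb C}^{3\times5}$ such that $S(\lambda)=D+C(I-\lambda_1A_{\gamma,1}-\lambda_2A_{\gamma,2})^{-1}(\lambda_1B_{\gamma,1}+\lambda_2B_{\gamma,2})$ is a weakly coisometric (observable) realization of $S$. Moreover, for $\gamma\neq\gamma'$ the pairs $(C,{\mathbf A}_\gamma)$ and $(C,{\mathbf A}_{\gamma'})$ are not unitarily equivalent.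
   Context: ${\mathcal S}_d({\mathcal U},{\mathcal Y})$ is the set of ${\mathcal L}({\mathcal U},{\mathcal Y})$-valued holomorphic $S$ on the unit ball ${\mathbb B}^d\subset{\mathbb C}^d$ such that $M_S:f\mapsto Sf$ is a contraction from ${\mathcal H}_{\mathcal U}(k_d)$ into ${\mathcal H}_{\mathcal Y}(k_d)$, where ${\mathcal H}_{\mathcal Y}(k_d)$ is the reproducing kernel Hilbert space with kernel $I_{\mathcal Y}/(1-\langle\lambda,\zeta\rangle)$. A pair $(C,{\mathbf A})$, $C\in{\mathcal L}({\mathcal X},{\mathcal Y})$, ${\mathbf A}=(A_1,\dots,A_d)$, is contractive if $\sum_jA_j^*A_j+C^*C\le I$, observable if $C(I-\sum_j\lambda_jA_j)^{-1}x\equiv0$ on ${\mathbb B}^d$ implies $x=0$. Two pairs $(C,{\mathbf A})$, $(C',{\mathbf A}')$ are unitarily equivalent if there is a unitary $U$ with $C'U=C$ and $A_j'U=UA_j$ for all $j$. With $A=\mathrm{col}(A_j)$, $B=\mathrm{col}(B_j)$, $Z(\lambda)=[\lambda_1I\ \cdots\ \lambda_dI]$, the realization $S(\lambda)=D+C(I-Z(\lambda)A)^{-1}Z(\lambda)B$ is weakly coisometric if ${\mathbf U}=\begin{bmatrix}A&B\\C&D\end{bmatrix}$ is a contraction and ${\mathbf U}^*$ is isometric on ${\mathcal D}\oplus{\mathcal Y}$, ${\mathcal D}=\overline{\mathrm{span}}\{Z(\zeta)^*(I-A^*Z(\zeta)^* )^{-1}C^*y:\zeta\in{\mathbb B}^d,y\in{\mathcal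 Y}\}$. *)

theory Defs
  imports "HOL-Analysis.Analysis"
begin

definition ball2 :: "(complex^2) set" where
  "ball2 = ball 0 1"

definition mono2 :: "complex^2 \<Rightarrow> nat \<times> nat \<Rightarrow> complex" where
  "mono2 z = (\<lambda>(i,j). (z$1)^i * (z$2)^j)"

text \<open>Squared norm of the monomial lambda^alpha in H(k_d), k_d = 1/(1 - <lambda,zeta>):
  ||lambda^alpha||^2 = alpha! / |alpha|!.\<close>
definition DA_weight :: "nat \<times> nat \<Rightarrow> real" where
  "DA_weight = (\<lambda>(i,j). fact i * fact j / fact (i + j))"

text \<open>c is the (vector-valued) Taylor coefficient family of f on the ball, and the
  H(k_2)-norm of f is finite. Such f are exactly the elements of H_{C^n}(k_2).\<close>
definition DA_coeffs :: "(complex^2 \<Rightarrow> complex^'n) \<Rightarrow> (nat \<times> nat \<Rightarrow> complex^'n) \<Rightarrow> bool" where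
  "DA_coeffs f c \<longleftrightarrow>
     (\<forall>z\<in>ball2. ((\<lambda>\<alpha>. mono2 z \<alpha> *s c \<alpha>) has_sum f z) UNIV) \<and>
     (\<lambda>\<alpha>. DA_weight \<alpha> * (norm (c \<alpha>))^2) summable_on UNIV"

definition DA_normsq :: "(nat \<times> nat \<Rightarrow> complex^'n) \<Rightarrow> real" where
  "DA_normsq c = infsum (\<lambda>\<alpha>. DA_weight \<alpha> * (norm (c \<alpha>))^2) UNIV"

definition holo2 :: "(complex^2 \<Rightarrow> complex) \<Rightarrow> bool" where
  "holo2 f \<longleftrightarrow> (\<forall>z\<in>ball2. \<exists>L. (f has_derivative L) (at z) \<and>
                               (\<forall>c v. L (c *s v) = c * L v))"

text \<open>Schur class S_2(C^u, C^y): holomorphic L(C^u,C^y)-valued S on the ball such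
  that M_S : f \<mapsto> S f is a contraction H_{C^u}(k_2) \<rightarrow> H_{C^y}(k_2).\<close>
definition schur2 :: "(complex^2 \<Rightarrow> complex^'u^'y) \<Rightarrow> bool" where
  "schur2 S \<longleftrightarrow> (\<forall>i j. holo2 (\<lambda>z. S z $ i $ j)) \<and>
     (\<forall>f c. DA_coeffs f c \<longrightarrow>
        (\<exists>e. DA_coeffs (\<lambda>z. S z *v f z) e \<and> DA_normsq e \<le> DA_normsq c))"

definition cadj :: "complex^'n^'m \<Rightarrow> complex^'m^'n" where
  "cadj M = (\<chi> i j. cnj (M $ j $ i))"

definition smat :: "complex \<Rightarrow> complex^'n^'m \<Rightarrow> complex^'n^'m" where
  "smat c M = (\<chi> i j. c * M $ i $ j)"

definition unitary_mat :: "complex^'n^'n \<Rightarrow> bool" where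
  "unitary_mat U \<longleftrightarrow> cadj U ** U = mat 1 \<and> U ** cadj U = mat 1"

definition resolv2 :: "complex^'x^'x \<Rightarrow> complex^'x^'x \<Rightarrow> complex^2 \<Rightarrow> complex^'x^'x" where
  "resolv2 A1 A2 z = matrix_inv (mat 1 - smat (z$1) A1 - smat (z$2) A2)"

text \<open>Contractive pair: A_1^*A_1 + A_2^*A_2 + C^*C \<le> I (as quadratic forms).\<close>
definition contractive_pair2 :: "complex^'x^'y \<Rightarrow> complex^'x^'x \<Rightarrow> complex^'x^'x \<Rightarrow> bool" where
  "contractive_pair2 C A1 A2 \<longleftrightarrow>
     (\<forall>x. (norm (A1 *v x))^2 + (norm (A2 *v x))^2 + (norm (C *v x))^2 \<le> (norm x)^2)"

definition observable2 :: "complex^'x^'y \<Rightarrow> complex^'x^'x \<Rightarrow> complex^'x^'x \<Rightarrow> bool" where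
  "observable2 C A1 A2 \<longleftrightarrow>
     (\<forall>x. (\<forall>z\<in>ball2. C *v (resolv2 A1 A2 z *v x) = 0) \<longrightarrow> x = 0)"

definition unit_equiv2 :: "complex^'x^'y \<Rightarrow> complex^'x^'x \<Rightarrow> complex^'x^'x \<Rightarrow>
                           complex^'x^'y \<Rightarrow> complex^'x^'x \<Rightarrow> complex^'x^'x \<Rightarrow> bool" where
  "unit_equiv2 C A1 A2 C' A1' A2' \<longleftrightarrow>
     (\<exists>U. unitary_mat U \<and> C' ** U = C \<and> A1' ** U = U ** A1 \<and> A2' ** U = U ** A2)"

definition realizes2 :: "(complex^2 \<Rightarrow> complex^'u^'y) \<Rightarrow> complex^'x^'x \<Rightarrow> complex^'x^'x \<Rightarrow>
     complex^'u^'x \<Rightarrow> complex^'u^'x \<Rightarrow> complex^'x^'y \<Rightarrow> complex^'u^'y \<Rightarrow> bool" where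
  "realizes2 S A1 A2 B1 B2 C D \<longleftrightarrow>
     (\<forall>z\<in>ball2. S z = D + C ** resolv2 A1 A2 z ** (smat (z$1) B1 + smat (z$2) B2))"

definition cspan2 :: "((complex^'x) \<times> (complex^'x)) set \<Rightarrow> ((complex^'x) \<times> (complex^'x)) set" where
  "cspan2 G = {(\<Sum>i<n. c i *s fst (g i), \<Sum>i<n. c i *s snd (g i)) | (n::nat) c g. \<forall>i<n. g i \<in> G}"

text \<open>The space \<D> = closed span of Z(zeta)^*(I - A^*Z(zeta)^*)^{-1} C^* y.\<close>
definition Dspace2 :: "complex^'x^'x \<Rightarrow> complex^'x^'x \<Rightarrow> complex^'x^'y \<Rightarrow> ((complex^'x) \<times> (complex^'x)) set" where
  "Dspace2 A1 A2 C = closure (cspan2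
     {(cnj (\<zeta>$1) *s v, cnj (\<zeta>$2) *s v) | \<zeta> y v. \<zeta> \<in> ball2 \<and>
        v = matrix_inv (mat 1 - smat (cnj (\<zeta>$1)) (cadj A1) - smat (cnj (\<zeta>$2)) (cadj A2))
              *v (cadj C *v y)})"

text \<open>Weakly coisometric colligation U = [A B; C D] : X \<oplus> U \<rightarrow> X^2 \<oplus> Y:
  U is a contraction and U^* is isometric on \<D> \<oplus> Y.\<close>
definition weakly_coisometric2 :: "complex^'x^'x \<Rightarrow> complex^'x^'x \<Rightarrow>
     complex^'u^'x \<Rightarrow> complex^'u^'x \<Rightarrow> complex^'x^'y \<Rightarrow> complex^'u^'y \<Rightarrow> bool" where
  "weakly_coisometric2 A1 A2 B1 B2 C D \<longleftrightarrow>
     (\<forall>x u. (norm (A1 *v x + B1 *v u))^2 + (norm (A2 *v x + B2 *v u))^2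
              + (norm (C *v x + D *v u))^2 \<le> (norm x)^2 + (norm u)^2) \<and>
     (\<forall>h\<in>Dspace2 A1 A2 C. \<forall>y.
        (norm (cadj A1 *v fst h + cadj A2 *v snd h + cadj C *v y))^2
        + (norm (cadj B1 *v fst h + cadj B2 *v snd h + cadj D *v y))^2
        = (norm (fst h))^2 + (norm (snd h))^2 + (norm y)^2)"

definition S_ex :: "complex^2 \<Rightarrow> complex^5^1" where
  "S_ex z = vector [vector [(z$1)^2 / 2, z$1 * z$2 / 2, z$1 * z$2 / 2, (z$2)^2 / 2,
                            complex_of_real (sqrt 3) / 2]]"

definition C_ex :: "complex^3^1" where
  "C_ex = vector [vector [1/2, 0, 0]]"

definition D_ex :: "complex^5^1" where
  "D_ex = vector [vector [0, 0, 0, 0, complex_of_real (sqrt 3) / 2]]"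

definition A1_ex :: "complex \<Rightarrow> complex^3^3" where
  "A1_ex \<gamma> = vector [vector [0, 1, 0], vector [0, 0, 0], vector [\<gamma>, 0, 0]]"

definition A2_ex :: "complex \<Rightarrow> complex^3^3" where
  "A2_ex \<gamma> = vector [vector [0, 0, 1], vector [-\<gamma>, 0, 0], vector [0, 0, 0]]"

end

theory Submission
  imports Defs
begin


lemma exhaust_5:
  fixes x :: 5
  shows "x = 1 \<or> x = 2 \<or> x = 3 \<or> x = 4 \<or> x = 5"
proof (induct x)
  case (of_int z)
  then have "z = 0 \<or> z = 1 \<or> z = 2 \<or> z = 3 \<or> z = 4" by fastforce
  then show ?case by auto
qed

lemma forall_5: "(\<forall>i::5. P i) \<longleftrightarrow> P 1 \<and> P 2 \<and> P 3 \<and> P 4 \<and> P 5"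
  by (metis exhaust_5)

lemma UNIV_5: "UNIV = {1, 2, 3, 4, 5::5}"
  using exhaust_5 by auto

lemma sum_5: "sum f (UNIV::5 set) = f 1 + f 2 + f 3 + f 4 + f 5"
  unfolding UNIV_5 by (simp add: ac_simps)

lemma vector_5 [simp]:
 "(vector [a,b,c,d,e] ::('a::zero)^5)$1 = a"
 "(vector [a,b,c,d,e] ::('a::zero)^5)$2 = b"
 "(vector [a,b,c,d,e] ::('a::zero)^5)$3 = c"
 "(vector [a,b,c,d,e] ::('a::zero)^5)$4 = d"
 "(vector [a,b,c,d,e] ::('a::zero)^5)$5 = e"
  unfolding vector_def by simp_all

definition s3 :: complex where "s3 = complex_of_real (sqrt 3)"

lemma s3_sq: "s3 * s3 = 3"
  unfolding s3_def by (simp flip: of_real_mult)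

lemma cnj_s3[simp]: "cnj s3 = s3" unfolding s3_def by simp

lemma s3_nz[simp]: "s3 \<noteq> 0" unfolding s3_def by simp

definition B1_ex :: "complex \<Rightarrow> complex^5^3" where
  "B1_ex g = vector [vector [0,0,0,0,0], vector [1,0,0,0,0], vector [0,1/2,1/2,0,-g * s3/3]]"

definition B2_ex :: "complex \<Rightarrow> complex^5^3" where
  "B2_ex g = vector [vector [0,0,0,0,0], vector [0,1/2,1/2,0,g * s3/3], vector [0,0,0,1,0]]"

lemma matrix_inv_eqI:
  fixes A :: "'a::semiring_1^'n^'n"
  assumes "A ** B = mat 1" "B ** A = mat 1"
  shows "matrix_inv A = B"
proof -
  have ex: "\<exists>A'. A ** A' = mat 1 \<and> A' ** A = mat 1" using assms by blast
  define A' where "A' = matrix_inv A"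
  have h: "A ** A' = mat 1 \<and> A' ** A = mat 1"
    unfolding A'_def matrix_inv_def by (rule someI_ex[OF ex])
  have "A' = (B ** A) ** A'" using assms by simp
  also have "\<dots> = B ** (A ** A')" by (simp add: matrix_mul_assoc)
  also have "\<dots> = B" using h by simp
  finally show ?thesis unfolding A'_def .
qed

lemma normsq_3: "(norm (x::complex^3))^2 = (cmod (x$1))^2 + (cmod (x$2))^2 + (cmod (x$3))^2"
  by (simp add: norm_vec_def L2_set_def sum_3)

lemma normsq_5: "(norm (x::complex^5))^2 = (cmod (x$1))^2 + (cmod (x$2))^2 + (cmod (x$3))^2
   + (cmod (x$4))^2 + (cmod (x$5))^2"
  by (simp add: norm_vec_def L2_set_def sum_5)

lemma normsq_1: "(norm (x::complex^1))^2 = (cmod (x$1))^2"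
  by (simp add: norm_vector_1)

lemma A1_mv: "A1_ex g *v x = vector [x$2, 0, g * x$1]"
  unfolding A1_ex_def by (simp add: vec_eq_iff forall_3 matrix_vector_mult_def sum_3)

lemma A2_mv: "A2_ex g *v x = vector [x$3, - g * x$1, 0]"
  unfolding A2_ex_def by (simp add: vec_eq_iff forall_3 matrix_vector_mult_def sum_3)

lemma C_mv: "C_ex *v x = vector [x$1 / 2]"
  unfolding C_ex_def by (simp add: vec_eq_iff matrix_vector_mult_def sum_3)

lemma D_mv: "D_ex *v u = vector [s3 / 2 * u$5]"
  unfolding D_ex_def s3_def by (simp add: vec_eq_iff matrix_vector_mult_def sum_5)

lemma B1_mv: "B1_ex g *v u = vector [0, u$1, (u$2 + u$3)/2 - g * s3/3 * u$5]"
  unfolding B1_ex_def by (simp add: vec_eq_iff forall_3 matrix_vector_mult_def sum_5 algebra_simps)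

lemma B2_mv: "B2_ex g *v u = vector [0, (u$2 + u$3)/2 + g * s3/3 * u$5, u$4]"
  unfolding B2_ex_def by (simp add: vec_eq_iff forall_3 matrix_vector_mult_def sum_5 algebra_simps)

lemma A1a_mv: "cadj (A1_ex g) *v x = vector [cnj g * x$3, x$1, 0]"
  unfolding A1_ex_def cadj_def by (simp add: vec_eq_iff forall_3 matrix_vector_mult_def sum_3)

lemma A2a_mv: "cadj (A2_ex g) *v x = vector [- cnj g * x$2, 0, x$1]"
  unfolding A2_ex_def cadj_def by (simp add: vec_eq_iff forall_3 matrix_vector_mult_def sum_3)

lemma Ca_mv: "cadj C_ex *v y = vector [y$1 / 2, 0, 0]"
  unfolding C_ex_def cadj_def by (simp add: vec_eq_iff forall_3 matrix_vector_mult_def)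

lemma Da_mv: "cadj D_ex *v y = vector [0, 0, 0, 0, s3 / 2 * y$1]"
  unfolding D_ex_def cadj_def s3_def by (simp add: vec_eq_iff forall_5 matrix_vector_mult_def)

lemma B1a_mv: "cadj (B1_ex g) *v h = vector [h$2, h$3/2, h$3/2, 0, - cnj g * s3 / 3 * h$3]"
  unfolding B1_ex_def cadj_def by (simp add: vec_eq_iff forall_5 matrix_vector_mult_def sum_3)

lemma B2a_mv: "cadj (B2_ex g) *v h = vector [0, h$2/2, h$2/2, h$3, cnj g * s3 / 3 * h$2]"
  unfolding B2_ex_def cadj_def by (simp add: vec_eq_iff forall_5 matrix_vector_mult_def sum_3)

lemma vec3_add: "vector[a,b,c] + vector[d,e,f] = (vector[a+d,b+e,c+f] :: 'a::monoid_add^3)"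
  by (simp add: vec_eq_iff forall_3)

lemma vec5_add: "vector[a,b,c,d,e] + vector[a',b',c',d',e'] =
   (vector[a+a',b+b',c+c',d+d',e+e'] :: 'a::monoid_add^5)"
  by (simp add: vec_eq_iff forall_5)

lemma cmod_s3: "cmod s3 = sqrt 3" unfolding s3_def by simp



lemma g_bound:
  assumes "cmod g < sqrt (3/8)"
  shows "2 * (cmod g)^2 \<le> 3/4"
proof -
  have "(cmod g)^2 < (sqrt (3/8))^2"
    using assms by (intro power_strict_mono) auto
  then show ?thesis by simp
qed

lemma contr_ex:
  assumes "cmod g < sqrt (3/8)"
  shows "contractive_pair2 C_ex (A1_ex g) (A2_ex g)"
  unfolding contractive_pair2_def
proof
  fix x :: "complex^3"
  have gb: "2 * (cmod g)^2 \<le> 3/4" using g_bound[OF assms] .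
  have "2 * (cmod g)^2 * (cmod (x$1))^2 \<le> 3/4 * (cmod (x$1))^2"
    using gb by (intro mult_right_mono) auto
  then show "(norm (A1_ex g *v x))\<^sup>2 + (norm (A2_ex g *v x))\<^sup>2 + (norm (C_ex *v x))\<^sup>2 \<le> (norm x)\<^sup>2"
    unfolding A1_mv A2_mv C_mv normsq_3 normsq_1
    by (simp add: norm_mult norm_divide power_mult_distrib power_divide)
qed

definition R_ex :: "complex \<Rightarrow> complex \<Rightarrow> complex \<Rightarrow> complex^3^3" where
  "R_ex g a b = vector [vector [1, a, b], vector [- g * b, 1 - g * a * b, - g * b * b],
     vector [g * a, g * a * a, 1 + g * a * b]]"

lemma resolv_ex: "resolv2 (A1_ex g) (A2_ex g) z = R_ex g (z$1) (z$2)"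
  unfolding resolv2_def
  by (rule matrix_inv_eqI)
     (simp_all add: vec_eq_iff forall_3 matrix_matrix_mult_def sum_3 mat_def smat_def
       A1_ex_def A2_ex_def R_ex_def algebra_simps)

lemma CR_ex: "C_ex *v (R_ex g a b *v x) = vector [(x$1 + a * x$2 + b * x$3) / 2]"
  unfolding C_mv by (simp add: R_ex_def matrix_vector_mult_def sum_3 vec_eq_iff)

lemma in_ball2: "(cmod a)^2 + (cmod b)^2 < 1 \<Longrightarrow> (vector [a, b] :: complex^2) \<in> ball2"
  by (simp add: ball2_def norm_vec_def L2_set_def sum_2)

lemma obs_ex: "observable2 C_ex (A1_ex g) (A2_ex g)"
  unfolding observable2_def
proof (intro allI impI)
  fix x :: "complex^3"
  assume H: "\<forall>z\<in>ball2. C_ex *v (resolv2 (A1_ex g) (A2_ex g) z *v x) = 0"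
  have H': "(x$1 + a * x$2 + b * x$3) / 2 = 0" if "(cmod a)^2 + (cmod b)^2 < 1" for a b
  proof -
    have "C_ex *v (resolv2 (A1_ex g) (A2_ex g) (vector [a,b]) *v x) = 0"
      using H in_ball2[OF that] by blast
    then have "(vector [(x$1 + a * x$2 + b * x$3) / 2] :: complex^1) $ 1 = 0"
      unfolding resolv_ex CR_ex by simp
    then show ?thesis by simp
  qed
  have 1: "x$1 = 0" using H'[of 0 0] by simp
  have 2: "x$2 = 0" using H'[of "1/2" 0] 1 by (simp add: power2_eq_square)
  have 3: "x$3 = 0" using H'[of 0 "1/2"] 1 by (simp add: power2_eq_square)
  show "x = 0" using 1 2 3 by (simp add: vec_eq_iff forall_3)
qed

lemma real_ex: "realizes2 S_ex (A1_ex g) (A2_ex g) (B1_ex g) (B2_ex g) C_ex D_ex"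
  unfolding realizes2_def resolv_ex
  by (simp add: vec_eq_iff forall_5 matrix_matrix_mult_def sum_3 smat_def S_ex_def D_ex_def
       C_ex_def R_ex_def B1_ex_def B2_ex_def algebra_simps power2_eq_square)

lemma unit_ex:
  assumes "g \<noteq> g'"
  shows "\<not> unit_equiv2 C_ex (A1_ex g) (A2_ex g) C_ex (A1_ex g') (A2_ex g')"
proof
  assume "unit_equiv2 C_ex (A1_ex g) (A2_ex g) C_ex (A1_ex g') (A2_ex g')"
  then obtain U where U: "C_ex ** U = C_ex" "A1_ex g' ** U = U ** A1_ex g" "A2_ex g' ** U = U ** A2_ex g"
    unfolding unit_equiv2_def by blast
  have k: "C_ex ** A2_ex h ** A1_ex h = smat h C_ex" for h
    by (simp add: vec_eq_iff forall_3 matrix_matrix_mult_def sum_3 smat_def C_ex_def A1_ex_def A2_ex_def)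
  have "C_ex ** A2_ex g' ** A1_ex g' ** U = C_ex ** A2_ex g ** A1_ex g"
    using U by (metis matrix_mul_assoc)
  then have "smat g' C_ex ** U = smat g C_ex" unfolding k .
  moreover have "smat h C_ex ** U = smat h (C_ex ** U)" for h
    by (simp add: vec_eq_iff smat_def matrix_matrix_mult_def sum_distrib_left mult.assoc)
  ultimately have "smat g' C_ex = smat g C_ex" using U by simp
  then have "g' * (1/2) = g * (1/2)"
    by (metis (no_types) C_ex_def smat_def vec_lambda_beta vector_1 vector_3(1))
  then show False using assms by simp
qed






lemma parallelogram_c: "(cmod (s + d))^2 + (cmod (s - d))^2 = 2 * (cmod s)^2 + 2 * (cmod d)^2"
  unfolding cmod_power2 by (simp add: power2_eq_square algebra_simps)

lemma p4_lemma: "3/4 * (cmod (p - s3/3 * q))^2 + (cmod (p/2 + s3/2 * q))^2 = (cmod p)^2 + (cmod q)^2"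
proof -
  have key: "(3 * ((a - r * b / 3) * (a - r * b / 3)) + 3 * ((c - r * d / 3) * (c - r * d / 3))) / 4 +
     ((a / 2 + r * b / 2) * (a / 2 + r * b / 2) + (c / 2 + r * d / 2) * (c / 2 + r * d / 2)) =
     a * a + c * c + (b * b + d * d)" if r2: "r * r = 3" for r a b c d :: real
  proof -
    have "(3 * ((a - r * b / 3) * (a - r * b / 3)) + 3 * ((c - r * d / 3) * (c - r * d / 3))) / 4 +
     ((a / 2 + r * b / 2) * (a / 2 + r * b / 2) + (c / 2 + r * d / 2) * (c / 2 + r * d / 2)) =
     a * a + c * c + (b * b + d * d) + (r * r / 3 - 1) * (b * b + d * d)"
      by (simp add: field_simps)
    then show ?thesis using r2 by simp
  qed
  show ?thesis
    unfolding s3_def cmod_power2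
    by (simp add: power2_eq_square key)
qed

lemma wc1_ex:
  assumes "cmod g < sqrt (3/8)"
  shows "(norm (A1_ex g *v x + B1_ex g *v u))^2 + (norm (A2_ex g *v x + B2_ex g *v u))^2
              + (norm (C_ex *v x + D_ex *v u))^2 \<le> (norm x)^2 + (norm u)^2"
proof -
  define s where "s = (u$2 + u$3)/2"
  define p where "p = x$1 - s3/3 * u$5"
  define d where "d = g * p"
  have e1: "g * x$1 + ((u$2 + u$3)/2 - g * s3/3 * u$5) = s + d"
    unfolding s_def d_def p_def by (simp add: algebra_simps)
  have e2: "- g * x$1 + ((u$2 + u$3)/2 + g * s3/3 * u$5) = s - d"
    unfolding s_def d_def p_def by (simp add: algebra_simps)
  have par: "(cmod (s + d))^2 + (cmod (s - d))^2 = 2 * (cmod s)^2 + 2 * (cmod d)^2"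
    by (rule parallelogram_c)
  have p2: "2 * (cmod s)^2 \<le> (cmod (u$2))^2 + (cmod (u$3))^2"
  proof -
    have "(cmod (u$2 + u$3))^2 + (cmod (u$2 - u$3))^2 = 2 * (cmod (u$2))^2 + 2 * (cmod (u$3))^2"
      by (rule parallelogram_c)
    moreover have "2 * (cmod s)^2 = (cmod (u$2 + u$3))^2 / 2"
      unfolding s_def by (simp add: norm_divide power_divide)
    moreover have "0 \<le> (cmod (u$2 - u$3))^2" by simp
    ultimately show ?thesis by linarith
  qed
  have p3: "2 * (cmod d)^2 \<le> 3/4 * (cmod p)^2"
  proof -
    have "2 * (cmod g)^2 * (cmod p)^2 \<le> 3/4 * (cmod p)^2"
      using g_bound[OF assms] by (intro mult_right_mono) auto
    then show ?thesis unfolding d_def by (simp add: norm_mult power_mult_distrib)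
  qed
  have p4: "3/4 * (cmod p)^2 + (cmod (x$1/2 + s3 * u$5 / 2))^2 = (cmod (x$1))^2 + (cmod (u$5))^2"
    using p4_lemma[of "x$1" "u$5"] unfolding p_def by simp
  have e1': "g * x $ 1 + ((u $ 2 + u $ 3) / 2 - g * s3 * u $ 5 / 3) = s + d"
    unfolding s_def d_def p_def by (simp add: algebra_simps)
  have e2': "(u $ 2 + u $ 3) / 2 + g * s3 * u $ 5 / 3 - g * x $ 1 = s - d"
    unfolding s_def d_def p_def by (simp add: algebra_simps)
  show ?thesis
    unfolding A1_mv A2_mv B1_mv B2_mv C_mv D_mv vec3_add normsq_3 normsq_5 normsq_1
    apply simp
    apply (simp only: e1' e2')
    using par p2 p3 p4 by linarith
qed

definition Ra_ex :: "complex \<Rightarrow> complex \<Rightarrow> complex \<Rightarrow> complex^3^3" where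
  "Ra_ex g a b = vector [vector [1, - b * g, a * g], vector [a, 1 - a * b * g, a * a * g],
     vector [b, - b * b * g, 1 + a * b * g]]"

lemma resolv_adj_ex:
  "matrix_inv (mat 1 - smat a (cadj (A1_ex g)) - smat b (cadj (A2_ex g))) = Ra_ex (cnj g) a b"
  by (rule matrix_inv_eqI)
     (simp_all add: vec_eq_iff forall_3 matrix_matrix_mult_def sum_3 mat_def smat_def cadj_def
       A1_ex_def A2_ex_def Ra_ex_def algebra_simps)

lemma Dspace_sub: "Dspace2 (A1_ex g) (A2_ex g) C_ex \<subseteq> {h. fst h $ 3 = snd h $ 2}"
proof -
  let ?P = "{h :: (complex^3) \<times> (complex^3). fst h $ 3 = snd h $ 2}"
  have cl: "closed ?P"
    by (intro closed_Collect_eq continuous_intros)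
  let ?G = "{(cnj (\<zeta>$1) *s v, cnj (\<zeta>$2) *s v) | \<zeta> y v. \<zeta> \<in> ball2 \<and>
        v = matrix_inv (mat 1 - smat (cnj (\<zeta>$1)) (cadj (A1_ex g)) - smat (cnj (\<zeta>$2)) (cadj (A2_ex g)))
              *v (cadj C_ex *v y)}"
  have G: "?G \<subseteq> ?P"
  proof
    fix h assume "h \<in> ?G"
    then obtain \<zeta> :: "complex^2" and y v where h: "h = (cnj (\<zeta>$1) *s v, cnj (\<zeta>$2) *s v)"
      and v: "v = Ra_ex (cnj g) (cnj (\<zeta>$1)) (cnj (\<zeta>$2)) *v (cadj C_ex *v y)"
      unfolding resolv_adj_ex by blast
    have "v = vector [y$1/2, cnj (\<zeta>$1) * (y$1/2), cnj (\<zeta>$2) * (y$1/2)]"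
      unfolding v Ca_mv by (simp add: Ra_ex_def vec_eq_iff forall_3 matrix_vector_mult_def sum_3)
    then show "h \<in> ?P" unfolding h by simp
  qed
  have sp: "cspan2 ?G \<subseteq> ?P"
  proof
    fix h assume "h \<in> cspan2 ?G"
    then obtain n :: nat and c gg where h: "h = (\<Sum>i<n. c i *s fst (gg i), \<Sum>i<n. c i *s snd (gg i))"
      and gg: "\<forall>i<n. gg i \<in> ?G"
      unfolding cspan2_def by blast
    have "\<forall>i<n. fst (gg i) $ 3 = snd (gg i) $ 2" using gg G by blast
    then show "h \<in> ?P" unfolding h by (simp add: sum_component)
  qed
  show ?thesis
    unfolding Dspace2_def by (rule closure_minimal[OF sp cl])
qed

lemma wc2_ex:
  assumes h: "h \<in> Dspace2 (A1_ex g) (A2_ex g) C_ex"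
  shows "(norm (cadj (A1_ex g) *v fst h + cadj (A2_ex g) *v snd h + cadj C_ex *v y))^2
        + (norm (cadj (B1_ex g) *v fst h + cadj (B2_ex g) *v snd h + cadj D_ex *v y))^2
        = (norm (fst h))^2 + (norm (snd h))^2 + (norm y)^2"
proof -
  have r: "fst h $ 3 = snd h $ 2" using Dspace_sub h by blast
  have s: "(cmod (s3 / 2 * z))^2 = 3/4 * (cmod z)^2" for z
    by (simp add: norm_mult norm_divide cmod_s3 power_mult_distrib power_divide)
  have t: "(cmod (z/2 + z/2))^2 = (cmod z)^2" for z :: complex by simp
  show ?thesis
    unfolding A1a_mv A2a_mv Ca_mv B1a_mv B2a_mv Da_mv vec3_add vec5_add normsq_3 normsq_5 normsq_1
    by (simp add: r s norm_divide power_divide norm_mult cmod_s3 power_mult_distrib)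
qed

lemma wc_ex:
  assumes "cmod g < sqrt (3/8)"
  shows "weakly_coisometric2 (A1_ex g) (A2_ex g) (B1_ex g) (B2_ex g) C_ex D_ex"
  unfolding weakly_coisometric2_def using wc1_ex[OF assms] wc2_ex by blast



definition sh1 :: "(nat \<times> nat \<Rightarrow> 'a::zero) \<Rightarrow> nat \<times> nat \<Rightarrow> 'a" where
  "sh1 g = (\<lambda>(i,j). if i = 0 then 0 else g (i - 1, j))"

definition sh2 :: "(nat \<times> nat \<Rightarrow> 'a::zero) \<Rightarrow> nat \<times> nat \<Rightarrow> 'a" where
  "sh2 g = (\<lambda>(i,j). if j = 0 then 0 else g (i, j - 1))"

lemma sh1_has_sum:
  fixes g :: "nat \<times> nat \<Rightarrow> 'a::{comm_monoid_add,topological_space}"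
  shows "(sh1 g has_sum s) UNIV \<longleftrightarrow> (g has_sum s) UNIV"
proof -
  let ?h = "\<lambda>(i::nat,j::nat). (Suc i, j)"
  have inj: "inj ?h" by (auto simp: inj_def)
  have z: "sh1 g x = 0" if "x \<notin> range ?h" for x
  proof (cases x)
    case (Pair a b)
    show ?thesis
    proof (cases a)
      case 0 then show ?thesis using Pair by (simp add: sh1_def)
    next
      case (Suc k)
      then have "x = ?h (k, b)" using Pair by simp
      then show ?thesis using that by blast
    qed
  qed
  have "(sh1 g has_sum s) UNIV \<longleftrightarrow> (sh1 g has_sum s) (range ?h)"
    by (rule has_sum_cong_neutral) (use z in auto)
  also have "\<dots> \<longleftrightarrow> ((sh1 g \<circ> ?h) has_sum s) UNIV" by (rule has_sum_reindex[OF inj])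
  also have "sh1 g \<circ> ?h = g" by (auto simp: sh1_def fun_eq_iff)
  finally show ?thesis .
qed

lemma sh2_has_sum:
  fixes g :: "nat \<times> nat \<Rightarrow> 'a::{comm_monoid_add,topological_space}"
  shows "(sh2 g has_sum s) UNIV \<longleftrightarrow> (g has_sum s) UNIV"
proof -
  let ?h = "\<lambda>(i::nat,j::nat). (i, Suc j)"
  have inj: "inj ?h" by (auto simp: inj_def)
  have z: "sh2 g x = 0" if "x \<notin> range ?h" for x
  proof (cases x)
    case (Pair a b)
    show ?thesis
    proof (cases b)
      case 0 then show ?thesis using Pair by (simp add: sh2_def)
    next
      case (Suc k)
      then have "x = ?h (a, k)" using Pair by simp
      then show ?thesis using that by blast
    qed
  qed
  have "(sh2 g has_sum s) UNIV \<longleftrightarrow> (sh2 g has_sum s) (range ?h)"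
    by (rule has_sum_cong_neutral) (use z in auto)
  also have "\<dots> \<longleftrightarrow> ((sh2 g \<circ> ?h) has_sum s) UNIV" by (rule has_sum_reindex[OF inj])
  also have "sh2 g \<circ> ?h = g" by (auto simp: sh2_def fun_eq_iff)
  finally show ?thesis .
qed

lemma mono2_sh1: "(\<lambda>\<alpha>. mono2 z \<alpha> * sh1 g \<alpha>) = sh1 (\<lambda>\<beta>. z$1 * (mono2 z \<beta> * g \<beta>))"
proof
  fix \<alpha> :: "nat \<times> nat"
  obtain i j where a: "\<alpha> = (i, j)" by (cases \<alpha>)
  show "mono2 z \<alpha> * sh1 g \<alpha> = sh1 (\<lambda>\<beta>. z$1 * (mono2 z \<beta> * g \<beta>)) \<alpha>"
    unfolding a by (cases i) (simp_all add: sh1_def mono2_def)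
qed

lemma mono2_sh2: "(\<lambda>\<alpha>. mono2 z \<alpha> * sh2 g \<alpha>) = sh2 (\<lambda>\<beta>. z$2 * (mono2 z \<beta> * g \<beta>))"
proof
  fix \<alpha> :: "nat \<times> nat"
  obtain i j where a: "\<alpha> = (i, j)" by (cases \<alpha>)
  show "mono2 z \<alpha> * sh2 g \<alpha> = sh2 (\<lambda>\<beta>. z$2 * (mono2 z \<beta> * g \<beta>)) \<alpha>"
    unfolding a by (cases j) (simp_all add: sh2_def mono2_def)
qed

lemma sh1_mono2_has_sum:
  assumes "((\<lambda>\<alpha>. mono2 z \<alpha> * g \<alpha>) has_sum s) UNIV"
  shows "((\<lambda>\<alpha>. mono2 z \<alpha> * sh1 g \<alpha>) has_sum (z$1 * s)) UNIV"
  unfolding mono2_sh1 sh1_has_sum using has_sum_cmult_right[OF assms] .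

lemma sh2_mono2_has_sum:
  assumes "((\<lambda>\<alpha>. mono2 z \<alpha> * g \<alpha>) has_sum s) UNIV"
  shows "((\<lambda>\<alpha>. mono2 z \<alpha> * sh2 g \<alpha>) has_sum (z$2 * s)) UNIV"
  unfolding mono2_sh2 sh2_has_sum using has_sum_cmult_right[OF assms] .

lemma sh12_mono2_has_sum:
  assumes "((\<lambda>\<alpha>. mono2 z \<alpha> * a \<alpha>) has_sum s) UNIV"
    and "((\<lambda>\<alpha>. mono2 z \<alpha> * b \<alpha>) has_sum t) UNIV"
  shows "((\<lambda>\<alpha>. mono2 z \<alpha> * (sh1 a \<alpha> + sh2 b \<alpha>)) has_sum (z$1 * s + z$2 * t)) UNIV"
  using has_sum_add[OF sh1_mono2_has_sum[OF assms(1)] sh2_mono2_has_sum[OF assms(2)]]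
  by (simp add: distrib_left)

lemma DA_weight_pos: "DA_weight \<alpha> > 0"
  by (cases \<alpha>) (simp add: DA_weight_def)

lemma DA_weight_eq: "DA_weight (a, b) = fact a * fact b / fact (a + b)"
  unfolding DA_weight_def by simp

lemma canc1: "(N::real) \<noteq> 0 \<Longrightarrow> F \<noteq> 0 \<Longrightarrow> a * b / F * c = c * a * b / (N * F) * N"
  by (simp add: field_simps)

lemma canc2: "(N::real) \<noteq> 0 \<Longrightarrow> F \<noteq> 0 \<Longrightarrow> a * b / F * c = a * (c * b) / (N * F) * N"
  by (simp add: field_simps)

lemma DA_w1: "DA_weight (i, j) * real (Suc i) = DA_weight (Suc i, j) * real (Suc i + j)"
proof -
  have a: "(fact (Suc i + j)::real) = real (Suc i + j) * fact (i + j)"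
    by (simp only: add_Suc fact_Suc of_nat_mult)
  have b: "(fact (Suc i)::real) = real (Suc i) * fact i"
    by (simp only: fact_Suc of_nat_mult)
  have N: "real (Suc i + j) \<noteq> 0" by simp
  have F: "(fact (i + j)::real) \<noteq> 0" by simp
  show ?thesis unfolding DA_weight_eq a b by (rule canc1[OF N F])
qed

lemma DA_w2: "DA_weight (i, j) * real (Suc j) = DA_weight (i, Suc j) * real (i + Suc j)"
proof -
  have a: "(fact (i + Suc j)::real) = real (i + Suc j) * fact (i + j)"
    by (simp only: add_Suc_right fact_Suc of_nat_mult)
  have b: "(fact (Suc j)::real) = real (Suc j) * fact j"
    by (simp only: fact_Suc of_nat_mult)
  have N: "real (i + Suc j) \<noteq> 0" by simp
  have F: "(fact (i + j)::real) \<noteq> 0" by simp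
  show ?thesis unfolding DA_weight_eq a b by (rule canc2[OF N F])
qed

lemma DA_w0: "DA_weight (0, j) = 1" "DA_weight (i, 0) = 1"
  unfolding DA_weight_def by simp_all

lemma rc_real:
  fixes x y :: real
  shows "(cmod (a + b))^2 * (x * y) \<le> (x + y) * y * (cmod a)^2 + (x + y) * x * (cmod b)^2"
proof -
  have "(x + y) * y * (cmod a)^2 + (x + y) * x * (cmod b)^2 - (cmod (a + b))^2 * (x * y)
     = (y * Re a - x * Re b)^2 + (y * Im a - x * Im b)^2"
    unfolding cmod_power2 by (simp add: power2_eq_square algebra_simps)
  moreover have "0 \<le> (y * Re a - x * Re b)^2 + (y * Im a - x * Im b)^2" by simp
  ultimately show ?thesis by linarith
qed

lemma RC:
  "DA_weight \<alpha> * (cmod (sh1 a \<alpha> + sh2 b \<alpha>))^2 \<le>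
     sh1 (\<lambda>\<beta>. DA_weight \<beta> * (cmod (a \<beta>))^2) \<alpha> + sh2 (\<lambda>\<beta>. DA_weight \<beta> * (cmod (b \<beta>))^2) \<alpha>"
proof -
  obtain i j where a: "\<alpha> = (i, j)" by (cases \<alpha>)
  show ?thesis
  proof (cases i)
    case 0
    then show ?thesis
      using a by (cases j) (simp_all add: sh1_def sh2_def DA_w0)
  next
    case (Suc i')
    note si = Suc
    show ?thesis
    proof (cases j)
      case 0
      then show ?thesis using a si by (simp add: sh1_def sh2_def DA_w0)
    next
      case (Suc j')
      define W where "W = DA_weight (i, j)"
      define x where "x = real i"
      define y where "y = real j"
      have xp: "x > 0" "y > 0" unfolding x_def y_def using si Suc by auto
      have w1: "DA_weight (i', j) * x = W * (x + y)"
        unfolding W_def x_def y_def si using DA_w1[of i' j] by simp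
      have w2: "DA_weight (i, j') * y = W * (x + y)"
        unfolding W_def x_def y_def Suc using DA_w2[of i j'] by simp
      define A where "A = a (i', j)"
      define B where "B = b (i, j')"
      have lhs: "DA_weight \<alpha> * (cmod (sh1 a \<alpha> + sh2 b \<alpha>))^2 = W * (cmod (A + B))^2"
        unfolding a W_def A_def B_def using si Suc by (simp add: sh1_def sh2_def)
      have rhs: "sh1 (\<lambda>\<beta>. DA_weight \<beta> * (cmod (a \<beta>))^2) \<alpha> + sh2 (\<lambda>\<beta>. DA_weight \<beta> * (cmod (b \<beta>))^2) \<alpha>
          = DA_weight (i', j) * (cmod A)^2 + DA_weight (i, j') * (cmod B)^2"
        unfolding a A_def B_def using si Suc by (simp add: sh1_def sh2_def)
      have W0: "W \<ge> 0" unfolding W_def using DA_weight_pos less_imp_le by blast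
      have "x * y * (W * (cmod (A + B))^2) = W * ((cmod (A + B))^2 * (x * y))"
        by (simp add: algebra_simps)
      also have "\<dots> \<le> W * ((x + y) * y * (cmod A)^2 + (x + y) * x * (cmod B)^2)"
        using rc_real W0 by (intro mult_left_mono) auto
      also have "\<dots> = x * y * (DA_weight (i', j) * (cmod A)^2 + DA_weight (i, j') * (cmod B)^2)"
      proof -
        have "x * y * (DA_weight (i', j) * (cmod A)^2 + DA_weight (i, j') * (cmod B)^2)
           = y * (DA_weight (i', j) * x) * (cmod A)^2 + x * (DA_weight (i, j') * y) * (cmod B)^2"
          by (simp add: algebra_simps)
        also have "\<dots> = W * ((x + y) * y * (cmod A)^2 + (x + y) * x * (cmod B)^2)"
          unfolding w1 w2 by (simp add: algebra_simps)
        finally show ?thesis by simp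
      qed
      finally have "x * y * (W * (cmod (A + B))^2)
          \<le> x * y * (DA_weight (i', j) * (cmod A)^2 + DA_weight (i, j') * (cmod B)^2)" .
      then have "W * (cmod (A + B))^2 \<le> DA_weight (i', j) * (cmod A)^2 + DA_weight (i, j') * (cmod B)^2"
        using xp by (simp add: mult_le_cancel_left_pos)
      then show ?thesis unfolding lhs rhs .
    qed
  qed
qed

lemma sh1_mono: "(\<And>\<beta>. f \<beta> \<le> (g \<beta> :: real)) \<Longrightarrow> sh1 f \<alpha> \<le> sh1 g \<alpha>"
  by (cases \<alpha>) (simp add: sh1_def)

lemma sh2_mono: "(\<And>\<beta>. f \<beta> \<le> (g \<beta> :: real)) \<Longrightarrow> sh2 f \<alpha> \<le> sh2 g \<alpha>"
  by (cases \<alpha>) (simp add: sh2_def)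

lemma sh1_nonneg: "(\<And>\<beta>. 0 \<le> (g \<beta> :: real)) \<Longrightarrow> 0 \<le> sh1 g \<alpha>"
  by (cases \<alpha>) (simp add: sh1_def)

lemma sh2_nonneg: "(\<And>\<beta>. 0 \<le> (g \<beta> :: real)) \<Longrightarrow> 0 \<le> sh2 g \<alpha>"
  by (cases \<alpha>) (simp add: sh2_def)

lemma CS2: "(cmod (a/2 + s3 * b / 2))^2 \<le> (cmod a)^2 + (cmod b)^2"
proof -
  have key: "(a1/2 + r * b1/2)^2 + (a2/2 + r * b2/2)^2 \<le> a1^2 + a2^2 + (b1^2 + b2^2)"
    if r2: "r * r = 3" for r a1 a2 b1 b2 :: real
  proof -
    have "a1^2 + a2^2 + (b1^2 + b2^2) - ((a1/2 + r * b1/2)^2 + (a2/2 + r * b2/2)^2)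
       = ((r * a1 - b1)^2 + (r * a2 - b2)^2) / 4 + (3 - r * r) / 4 * (a1^2 + a2^2 + b1^2 + b2^2)"
      by (simp add: field_simps power2_eq_square)
    also have "\<dots> = ((r * a1 - b1)^2 + (r * a2 - b2)^2) / 4" using r2 by simp
    also have "\<dots> \<ge> 0" by simp
    finally show ?thesis by linarith
  qed
  have r2: "sqrt 3 * sqrt 3 = (3::real)" by simp
  show ?thesis
    unfolding s3_def cmod_power2 using key[OF r2] by simp
qed



lemma holo2_const: "holo2 (\<lambda>z. c)"
  unfolding holo2_def by (intro ballI exI[of _ "\<lambda>h. 0"]) auto

lemma holo2_coord: "holo2 (\<lambda>z. z $ k)"
  unfolding holo2_def
proof (intro ballI exI[of _ "\<lambda>h. h $ k"] conjI allI)
  fix z :: "complex^2"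
  show "((\<lambda>z. z $ k) has_derivative (\<lambda>h. h $ k)) (at z)"
    by (rule bounded_linear_imp_has_derivative) (rule bounded_linear_vec_nth)
qed simp

lemma holo2_mult:
  assumes "holo2 f" "holo2 g"
  shows "holo2 (\<lambda>z. f z * g z)"
  unfolding holo2_def
proof
  fix z assume z: "z \<in> ball2"
  obtain F where F: "(f has_derivative F) (at z)" "\<And>c v. F (c *s v) = c * F v"
    using assms(1) z unfolding holo2_def by blast
  obtain G where G: "(g has_derivative G) (at z)" "\<And>c v. G (c *s v) = c * G v"
    using assms(2) z unfolding holo2_def by blast
  show "\<exists>L. ((\<lambda>z. f z * g z) has_derivative L) (at z) \<and> (\<forall>c v. L (c *s v) = c * L v)"
    using has_derivative_mult[OF F(1) G(1)] F(2) G(2)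
    by (intro exI[of _ "\<lambda>h. f z * G h + F h * g z"]) (simp add: algebra_simps)
qed

lemma holo2_divc: "holo2 f \<Longrightarrow> holo2 (\<lambda>z. f z / c)"
  using holo2_mult[of f "\<lambda>z. 1 / c"] holo2_const by simp

lemma holo_S: "holo2 (\<lambda>z. S_ex z $ i $ j)"
proof -
  have i: "i = 1" by simp
  have c1: "holo2 (\<lambda>z. z $ a * z $ b / 2)" for a b
    by (intro holo2_divc holo2_mult holo2_coord)
  from exhaust_5[of j] show ?thesis
    unfolding i
    by (elim disjE) (simp_all add: S_ex_def power2_eq_square c1 holo2_const)
qed

lemma S_mv: "S_ex z *v v = vector [(z$1)^2/2 * v$1 + z$1 * z$2/2 * v$2 + z$1 * z$2/2 * v$3
    + (z$2)^2/2 * v$4 + s3/2 * v$5]"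
  unfolding S_ex_def s3_def by (simp add: vec_eq_iff matrix_vector_mult_def sum_5)

lemma vec1_has_sum:
  assumes "((\<lambda>\<alpha>. F \<alpha> $ 1) has_sum s) A"
  shows "(F has_sum (vector [s] :: complex^1)) A"
proof -
  have bl: "bounded_linear (\<lambda>x::complex. (vector [x] :: complex^1))"
    by (rule bounded_linear_intro[where K=1]) (simp_all add: vec_eq_iff norm_vector_1)
  have "((\<lambda>\<alpha>. (vector [F \<alpha> $ 1] :: complex^1)) has_sum vector [s]) A"
    using has_sum_bounded_linear[OF bl assms] .
  moreover have "(\<lambda>\<alpha>. (vector [F \<alpha> $ 1] :: complex^1)) = F" by (simp add: fun_eq_iff vec_eq_iff)
  ultimately show ?thesis by simp
qed

lemma nonneg_abs_summable:
  fixes g :: "'a \<Rightarrow> real"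
  assumes "g summable_on A" "\<And>x. 0 \<le> g x"
  shows "(\<lambda>x. norm (g x)) summable_on A"
proof -
  have "(\<lambda>x. norm (g x)) = g" using assms(2) by (simp add: fun_eq_iff)
  then show ?thesis using assms(1) by simp
qed

lemma comparison_real:
  fixes f g :: "'a \<Rightarrow> real"
  assumes "g summable_on A" "\<And>x. 0 \<le> f x" "\<And>x. f x \<le> g x"
  shows "f summable_on A"
proof -
  have g0: "0 \<le> g x" for x using assms(2,3) order_trans by blast
  have "(\<lambda>x. norm (f x)) summable_on A"
    by (rule Infinite_Sum.abs_summable_on_comparison_test[OF nonneg_abs_summable[OF assms(1) g0]])
       (use assms g0 in auto)
  then show ?thesis by (rule Infinite_Sum.abs_summable_summable)
qed



lemma schur_S: "schur2 S_ex"
  unfolding schur2_def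
proof (intro conjI allI impI)
  fix i :: 1 and j :: 5
  show "holo2 (\<lambda>z. S_ex z $ i $ j)" by (rule holo_S)
next
  fix f :: "complex^2 \<Rightarrow> complex^5" and c :: "nat \<times> nat \<Rightarrow> complex^5"
  assume dc: "DA_coeffs f c"
  define ck where "ck = (\<lambda>k \<alpha>. c \<alpha> $ k)"
  define G1 where "G1 = (\<lambda>\<alpha>. sh1 (ck 1) \<alpha> + sh2 (ck 2) \<alpha>)"
  define G2 where "G2 = (\<lambda>\<alpha>. sh1 (ck 3) \<alpha> + sh2 (ck 4) \<alpha>)"
  define E where "E = (\<lambda>\<alpha>. sh1 G1 \<alpha> + sh2 G2 \<alpha>)"
  define e1 where "e1 = (\<lambda>\<alpha>. E \<alpha> / 2 + s3 * ck 5 \<alpha> / 2)"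
  define e :: "nat \<times> nat \<Rightarrow> complex^1" where "e = (\<lambda>\<alpha>. vector [e1 \<alpha>])"
  have hs: "((\<lambda>\<alpha>. mono2 z \<alpha> *s e \<alpha>) has_sum (S_ex z *v f z)) UNIV" if z: "z \<in> ball2" for z
  proof -
    have hc: "((\<lambda>\<alpha>. mono2 z \<alpha> *s c \<alpha>) has_sum f z) UNIV"
      using dc z unfolding DA_coeffs_def by blast
    have hk: "((\<lambda>\<alpha>. mono2 z \<alpha> * ck k \<alpha>) has_sum f z $ k) UNIV" for k
      using has_sum_bounded_linear[OF bounded_linear_vec_nth[of k] hc] by (simp add: ck_def)
    have h1: "((\<lambda>\<alpha>. mono2 z \<alpha> * G1 \<alpha>) has_sum (z$1 * f z $ 1 + z$2 * f z $ 2)) UNIV"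
      unfolding G1_def by (rule sh12_mono2_has_sum[OF hk hk])
    have h2: "((\<lambda>\<alpha>. mono2 z \<alpha> * G2 \<alpha>) has_sum (z$1 * f z $ 3 + z$2 * f z $ 4)) UNIV"
      unfolding G2_def by (rule sh12_mono2_has_sum[OF hk hk])
    have hE: "((\<lambda>\<alpha>. mono2 z \<alpha> * E \<alpha>) has_sum
        (z$1 * (z$1 * f z $ 1 + z$2 * f z $ 2) + z$2 * (z$1 * f z $ 3 + z$2 * f z $ 4))) UNIV"
      unfolding E_def by (rule sh12_mono2_has_sum[OF h1 h2])
    define tot where "tot = 1/2 * (z$1 * (z$1 * f z $ 1 + z$2 * f z $ 2) + z$2 * (z$1 * f z $ 3 + z$2 * f z $ 4))
        + s3/2 * f z $ 5"
    have he0: "((\<lambda>\<alpha>. 1/2 * (mono2 z \<alpha> * E \<alpha>) + s3/2 * (mono2 z \<alpha> * ck 5 \<alpha>)) has_sum tot) UNIV"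
      unfolding tot_def
      by (rule has_sum_add[OF has_sum_cmult_right[OF hE] has_sum_cmult_right[OF hk]])
    have he: "((\<lambda>\<alpha>. (mono2 z \<alpha> *s e \<alpha>) $ 1) has_sum tot) UNIV"
    proof -
      have "(mono2 z \<alpha> *s e \<alpha>) $ 1 = 1/2 * (mono2 z \<alpha> * E \<alpha>) + s3/2 * (mono2 z \<alpha> * ck 5 \<alpha>)" for \<alpha>
        by (simp add: e_def e1_def algebra_simps)
      then show ?thesis using he0 by simp
    qed
    have "S_ex z *v f z = vector [tot]"
      unfolding S_mv tot_def by (simp add: vec_eq_iff algebra_simps power2_eq_square)
    then show ?thesis using vec1_has_sum[OF he] by simp
  qed
  define W where "W = (\<lambda>\<alpha>. DA_weight \<alpha> * (norm (c \<alpha>))^2)"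
  define Wk where "Wk = (\<lambda>k \<alpha>. DA_weight \<alpha> * (cmod (ck k \<alpha>))^2)"
  have wpos: "0 \<le> DA_weight \<alpha>" for \<alpha> using DA_weight_pos less_imp_le by blast
  have Wsum: "W summable_on UNIV" using dc unfolding DA_coeffs_def W_def by blast
  have Wdec: "W \<alpha> = Wk 1 \<alpha> + Wk 2 \<alpha> + Wk 3 \<alpha> + Wk 4 \<alpha> + Wk 5 \<alpha>" for \<alpha>
    unfolding W_def Wk_def ck_def normsq_5 by (simp add: algebra_simps)
  have Wk_nn: "0 \<le> Wk k \<alpha>" for k \<alpha> unfolding Wk_def using wpos by simp
  have Wk_le: "Wk k \<alpha> \<le> W \<alpha>" for k \<alpha>
  proof -
    have "cmod (ck k \<alpha>) \<le> norm (c \<alpha>)" unfolding ck_def by (rule Finite_Cartesian_Product.norm_nth_le)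
    then have "(cmod (ck k \<alpha>))^2 \<le> (norm (c \<alpha>))^2" by (intro power_mono) auto
    then show ?thesis unfolding Wk_def W_def using wpos by (intro mult_left_mono) auto
  qed
  have Wk_sum: "Wk k summable_on UNIV" for k
    by (rule comparison_real[OF Wsum Wk_nn Wk_le])
  define I where "I = (\<lambda>k. infsum (Wk k) UNIV)"
  have Wk_has: "(Wk k has_sum I k) UNIV" for k using Wk_sum[of k] by (simp add: I_def)
  define T where "T = (\<lambda>\<alpha>. sh1 (\<lambda>\<beta>. sh1 (Wk 1) \<beta> + sh2 (Wk 2) \<beta>) \<alpha>
      + sh2 (\<lambda>\<beta>. sh1 (Wk 3) \<beta> + sh2 (Wk 4) \<beta>) \<alpha> + Wk 5 \<alpha>)"
  have T_has: "(T has_sum (I 1 + I 2 + (I 3 + I 4) + I 5)) UNIV"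
  proof -
    have a: "((\<lambda>\<beta>. sh1 (Wk 1) \<beta> + sh2 (Wk 2) \<beta>) has_sum (I 1 + I 2)) UNIV"
      by (rule has_sum_add) (simp_all add: sh1_has_sum sh2_has_sum Wk_has)
    have b: "((\<lambda>\<beta>. sh1 (Wk 3) \<beta> + sh2 (Wk 4) \<beta>) has_sum (I 3 + I 4)) UNIV"
      by (rule has_sum_add) (simp_all add: sh1_has_sum sh2_has_sum Wk_has)
    have a': "(sh1 (\<lambda>\<beta>. sh1 (Wk 1) \<beta> + sh2 (Wk 2) \<beta>) has_sum (I 1 + I 2)) UNIV"
      using a by (simp add: sh1_has_sum)
    have b': "(sh2 (\<lambda>\<beta>. sh1 (Wk 3) \<beta> + sh2 (Wk 4) \<beta>) has_sum (I 3 + I 4)) UNIV"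
      using b by (simp add: sh2_has_sum)
    show ?thesis unfolding T_def by (rule has_sum_add[OF has_sum_add[OF a' b'] Wk_has])
  qed
  have W_has: "(W has_sum (I 1 + I 2 + I 3 + I 4 + I 5)) UNIV"
  proof -
    have "((\<lambda>\<alpha>. Wk 1 \<alpha> + Wk 2 \<alpha> + Wk 3 \<alpha> + Wk 4 \<alpha> + Wk 5 \<alpha>) has_sum (I 1 + I 2 + I 3 + I 4 + I 5)) UNIV"
      by (intro has_sum_add Wk_has)
    moreover have "(\<lambda>\<alpha>. Wk 1 \<alpha> + Wk 2 \<alpha> + Wk 3 \<alpha> + Wk 4 \<alpha> + Wk 5 \<alpha>) = W"
      using Wdec by (simp add: fun_eq_iff)
    ultimately show ?thesis by simp
  qed
  have pw: "DA_weight \<alpha> * (norm (e \<alpha>))^2 \<le> T \<alpha>" for \<alpha>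
  proof -
    have n: "(norm (e \<alpha>))^2 = (cmod (e1 \<alpha>))^2" by (simp add: e_def normsq_1)
    have c1: "(cmod (e1 \<alpha>))^2 \<le> (cmod (E \<alpha>))^2 + (cmod (ck 5 \<alpha>))^2"
      unfolding e1_def by (rule CS2)
    have c2: "DA_weight \<alpha> * (cmod (E \<alpha>))^2 \<le> sh1 (\<lambda>\<beta>. DA_weight \<beta> * (cmod (G1 \<beta>))^2) \<alpha>
        + sh2 (\<lambda>\<beta>. DA_weight \<beta> * (cmod (G2 \<beta>))^2) \<alpha>"
      unfolding E_def by (rule RC)
    have c3: "sh1 (\<lambda>\<beta>. DA_weight \<beta> * (cmod (G1 \<beta>))^2) \<alpha> \<le> sh1 (\<lambda>\<beta>. sh1 (Wk 1) \<beta> + sh2 (Wk 2) \<beta>) \<alpha>"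
      unfolding G1_def Wk_def by (intro sh1_mono RC)
    have c4: "sh2 (\<lambda>\<beta>. DA_weight \<beta> * (cmod (G2 \<beta>))^2) \<alpha> \<le> sh2 (\<lambda>\<beta>. sh1 (Wk 3) \<beta> + sh2 (Wk 4) \<beta>) \<alpha>"
      unfolding G2_def Wk_def by (intro sh2_mono RC)
    have "DA_weight \<alpha> * (norm (e \<alpha>))^2 \<le> DA_weight \<alpha> * ((cmod (E \<alpha>))^2 + (cmod (ck 5 \<alpha>))^2)"
      unfolding n using c1 wpos by (intro mult_left_mono) auto
    also have "\<dots> = DA_weight \<alpha> * (cmod (E \<alpha>))^2 + Wk 5 \<alpha>"
      unfolding Wk_def by (simp add: algebra_simps)
    also have "\<dots> \<le> T \<alpha>" unfolding T_def using c2 c3 c4 by linarith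
    finally show ?thesis .
  qed
  have e_nn: "0 \<le> DA_weight \<alpha> * (norm (e \<alpha>))^2" for \<alpha> using wpos by simp
  have T_sum: "T summable_on UNIV" using T_has summable_on_def by blast
  have esum: "(\<lambda>\<alpha>. DA_weight \<alpha> * (norm (e \<alpha>))^2) summable_on UNIV"
    by (rule comparison_real[OF T_sum e_nn pw])
  have "DA_normsq e \<le> infsum T UNIV"
    unfolding DA_normsq_def by (rule infsum_mono[OF esum T_sum pw])
  also have "infsum T UNIV = I 1 + I 2 + I 3 + I 4 + I 5"
    using infsumI[OF T_has] by (simp add: algebra_simps)
  also have "\<dots> = DA_normsq c"
    unfolding DA_normsq_def using infsumI[OF W_has] by (simp add: W_def)
  finally have nle: "DA_normsq e \<le> DA_normsq c" .
  have "DA_coeffs (\<lambda>z. S_ex z *v f z) e"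
    unfolding DA_coeffs_def using hs esum by blast
  then show "\<exists>e. DA_coeffs (\<lambda>z. S_ex z *v f z) e \<and> DA_normsq e \<le> DA_normsq c"
    using nle by blast
qed


theorem mainTheorem6:
  shows "schur2 S_ex \<and>
    (\<forall>\<gamma>::complex. norm \<gamma> < sqrt (3/8) \<longrightarrow>
       contractive_pair2 C_ex (A1_ex \<gamma>) (A2_ex \<gamma>) \<and>
       observable2 C_ex (A1_ex \<gamma>) (A2_ex \<gamma>) \<and>
       (\<exists>B1 B2 :: complex^5^3.
          realizes2 S_ex (A1_ex \<gamma>) (A2_ex \<gamma>) B1 B2 C_ex D_ex \<and>
          weakly_coisometric2 (A1_ex \<gamma>) (A2_ex \<gamma>) B1 B2 C_ex D_ex)) \<and>
    (\<forall>\<gamma> \<gamma>' :: complex. \<gamma> \<noteq> \<gamma>' \<longrightarrow>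
       \<not> unit_equiv2 C_ex (A1_ex \<gamma>) (A2_ex \<gamma>) C_ex (A1_ex \<gamma>') (A2_ex \<gamma>'))"
proof -
  have P2: "contractive_pair2 C_ex (A1_ex \<gamma>) (A2_ex \<gamma>) \<and>
       observable2 C_ex (A1_ex \<gamma>) (A2_ex \<gamma>) \<and>
       (\<exists>B1 B2 :: complex^5^3.
          realizes2 S_ex (A1_ex \<gamma>) (A2_ex \<gamma>) B1 B2 C_ex D_ex \<and>
          weakly_coisometric2 (A1_ex \<gamma>) (A2_ex \<gamma>) B1 B2 C_ex D_ex)"
    if g: "norm \<gamma> < sqrt (3/8)" for \<gamma> :: complex
  proof -
    have "realizes2 S_ex (A1_ex \<gamma>) (A2_ex \<gamma>) (B1_ex \<gamma>) (B2_ex \<gamma>) C_ex D_ex \<and>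
          weakly_coisometric2 (A1_ex \<gamma>) (A2_ex \<gamma>) (B1_ex \<gamma>) (B2_ex \<gamma>) C_ex D_ex"
      using real_ex wc_ex g by simp
    then show ?thesis using contr_ex[OF g] obs_ex by blast
  qed
  show ?thesis using schur_S P2 unit_ex by blast
qed

end
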